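(* Let $d\ge 2$ and let $g:[-1,1]\to(-\infty,\infty]$ be a function that is finite and continuous on $[-1,1)$ with $g(1)=\lim_{t\to1^-}g(t)$, differentiable on $(-1,1)$, and such that $g''$ exists and is non-negative and convex on $(-1,1)$. Let $\omega_{2d}$ be any antipodal configuration of $2d$ points on $S^{d-1}$, and let $\overline\omega_{2d}=\{\pm\mathbf a_1,\ldots,\pm\mathbf a_d\}$, where $\{\mathbf a_1,\dots,\mathbf a_d\}$ is an orthonormal basis of $\mathbb R^d$. Then $$P^g(\omega_{2d},S^{d-1})\leq P^g(\overline\omega_{2d},S^{d-1})=d\left(g\left(\tfrac1{\sqrt d}\right)+g\left(-\tfrac1{\sqrt d}\right)\right).$$
   Context: $S^{d-1}$ is the unit sphere in $\mathbb R^d$. A configuration is a list of points (points may coincide); it is antipodal if together with $\mathbf x$ it contains $-\mathbf x$. For a configuration $\omega_N=\{\mathbf x_1,\ldots,\mathbf x_N\}\subset S^{d-1}$, $P^g(\omega_N,S^{d-1}):=\min_{\mathbf x\in S^{d-1}}\sum_{i=1}^N g(\mathbf x\cdot\mathbf x_i)$. *)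

theory Defs
  imports "HOL-Analysis.Analysis" "HOL-Library.Multiset"
begin

text \<open>A configuration on the sphere is a finite multiset of points (points may coincide).
  It is antipodal if it is invariant (with multiplicities) under x \<mapsto> -x.\<close>

definition antipodal :: "('a::real_normed_vector) multiset \<Rightarrow> bool" where
  "antipodal \<omega> \<longleftrightarrow> image_mset uminus \<omega> = \<omega>"

text \<open>Polarization P^g(omega, S^{d-1}); potentials take values in (-inf, +inf], modelled by ereal.\<close>

definition polarization ::
  "(real \<Rightarrow> ereal) \<Rightarrow> (real^'n) multiset \<Rightarrow> ereal" where
  "polarization g \<omega> = (INF x\<in>sphere (0::real^'n) 1. (\<Sum>y\<in>#\<omega>. g (x \<bullet> y)))"

end

theory Submission
  imports Defs
begin


lemma calc_lemma:
  fixes G :: "real \<Rightarrow> real"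
  assumes d1: "\<forall>t\<in>{-1<..<1}. G differentiable (at t)"
    and d2: "\<forall>t\<in>{-1<..<1}. deriv G differentiable (at t)"
    and nn: "\<forall>t\<in>{-1<..<1}. deriv (deriv G) t \<ge> 0"
    and cv: "convex_on {-1<..<1} (deriv (deriv G))"
    and c: "0 < c" "c < 1"
  shows "\<And>s t. 0 \<le> s \<Longrightarrow> s \<le> t \<Longrightarrow> t < 1 \<Longrightarrow> G s + G (-s) \<le> G t + G (-t)"
    and "\<And>t. t \<in> {-1<..<1} \<Longrightarrow>
           G c + G (-c) - (deriv G c - deriv G (-c)) / (2*c) * c\<^sup>2
             \<le> G t + G (-t) - (deriv G c - deriv G (-c)) / (2*c) * t\<^sup>2"
proof -
  define G1 where "G1 = deriv G"
  define G2 where "G2 = deriv G1"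
  define H where "H = (\<lambda>t. G t + G (-t))"
  define H1 where "H1 = (\<lambda>t. G1 t - G1 (-t))"
  define k where "k = (\<lambda>t. G2 t + G2 (-t))"
  have DG: "DERIV G t :> G1 t" if "t \<in> {-1<..<1}" for t
    using d1 that DERIV_deriv_iff_real_differentiable G1_def by blast
  have DG1: "DERIV G1 t :> G2 t" if "t \<in> {-1<..<1}" for t
    using d2 that DERIV_deriv_iff_real_differentiable G1_def G2_def by blast
  have DH: "DERIV H t :> H1 t" if "t \<in> {-1<..<1}" for t
  proof -
    have "DERIV G (-t) :> G1 (-t)" using DG that by auto
    then have "DERIV (\<lambda>x. G (-x)) t :> - G1 (-t)" using DERIV_mirror by blast
    then show ?thesis unfolding H_def H1_def using DG[OF that]
      by (auto intro!: derivative_eq_intros)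
  qed
  have DH1: "DERIV H1 t :> k t" if "t \<in> {-1<..<1}" for t
  proof -
    have "DERIV G1 (-t) :> G2 (-t)" using DG1 that by auto
    then have "DERIV (\<lambda>x. G1 (-x)) t :> - G2 (-t)" using DERIV_mirror by blast
    then show ?thesis unfolding k_def H1_def using DG1[OF that]
      by (auto intro!: derivative_eq_intros)
  qed
  have knn: "k t \<ge> 0" if "t \<in> {-1<..<1}" for t
    using nn that unfolding k_def G2_def G1_def by auto
  have kmono: "k s \<le> k t" if "0 \<le> s" "s \<le> t" "t < 1" for s t
  proof (cases "t = 0")
    case True then show ?thesis using that by auto
  next
    case False
    then have tp: "t > 0" using that by auto
    define m where "m = (s + t) / (2*t)"
    have m01: "0 \<le> m" "m \<le> 1" using that tp unfolding m_def by (auto simp: field_simps)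
    have A: "t \<in> {-1<..<1}" "-t \<in> {-1<..<1}" using that by auto
    have e1: "s = (1 - m) *\<^sub>R (-t) + m *\<^sub>R t" using tp unfolding m_def by (simp add: field_simps)
    have e2: "-s = (1 - m) *\<^sub>R t + m *\<^sub>R (-t)" using tp unfolding m_def by (simp add: field_simps)
    have "G2 s \<le> (1 - m) * G2 (-t) + m * G2 t"
      using convex_onD[OF cv m01 A(2) A(1)] e1 unfolding G2_def G1_def by simp
    moreover have "G2 (-s) \<le> (1 - m) * G2 t + m * G2 (-t)"
      using convex_onD[OF cv m01 A(1) A(2)] e2 unfolding G2_def G1_def by simp
    ultimately show ?thesis unfolding k_def by (simp add: algebra_simps)
  qed
  have H10: "H1 0 = 0" unfolding H1_def by simp
  have H1nn: "H1 t \<ge> 0" if "0 \<le> t" "t < 1" for t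
  proof -
    have "H1 0 \<le> H1 t"
    proof (rule DERIV_nonneg_imp_nondecreasing[OF that(1)])
      fix x assume "0 \<le> x" "x \<le> t"
      then show "\<exists>y. DERIV H1 x :> y \<and> 0 \<le> y"
        using that DH1[of x] knn[of x] by (intro exI[of _ "k x"]) auto
    qed
    then show ?thesis using H10 by simp
  qed
  show "G s + G (-s) \<le> G t + G (-t)" if "0 \<le> s" "s \<le> t" "t < 1" for s t
  proof -
    have "H s \<le> H t"
    proof (rule DERIV_nonneg_imp_nondecreasing[OF that(2)])
      fix x assume "s \<le> x" "x \<le> t"
      then show "\<exists>y. DERIV H x :> y \<and> 0 \<le> y"
        using that DH[of x] H1nn[of x] by (intro exI[of _ "H1 x"]) auto
    qed
    then show ?thesis unfolding H_def .
  qed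
  have Q: "H1 t \<le> t * k t" if tQ: "0 < t" "t < 1" for t
  proof -
    obtain z where z: "0 < z" "z < t" "H1 t - H1 0 = (t - 0) * k z"
    proof -
      have "\<exists>z>0. z < t \<and> H1 t - H1 0 = (t - 0) * k z"
        by (rule MVT2) (use tQ DH1 in auto)
      then show ?thesis using that by auto
    qed
    have "k z \<le> k t" using kmono z that by auto
    then show ?thesis using z H10 that by (simp add: mult_left_mono)
  qed
  define q where "q = (\<lambda>t. H1 t / t)"
  have qmono: "q s \<le> q t" if "0 < s" "s \<le> t" "t < 1" for s t
  proof (rule DERIV_nonneg_imp_nondecreasing[OF that(2)])
    fix x assume x: "s \<le> x" "x \<le> t"
    have "DERIV q x :> (k x * x - 1 * H1 x) / x ^ Suc (Suc 0)"
      unfolding q_def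
      by (rule DERIV_quotient) (use DH1 x that in \<open>auto intro!: derivative_eq_intros\<close>)
    moreover have "(k x * x - 1 * H1 x) / x ^ Suc (Suc 0) \<ge> 0"
      using Q[of x] x that by (auto simp: algebra_simps)
    ultimately show "\<exists>y. DERIV q x :> y \<and> 0 \<le> y" by blast
  qed
  define L where "L = H1 c / (2*c)"
  define \<phi> where "\<phi> = (\<lambda>t. H t - L * t\<^sup>2)"
  have Dphi: "DERIV \<phi> t :> H1 t - t * q c" if "t \<in> {-1<..<1}" for t
    unfolding \<phi>_def using DH[OF that] c
    by (auto intro!: derivative_eq_intros simp: L_def q_def field_simps)
  have phi_pos: "\<phi> c \<le> \<phi> t" if "0 \<le> t" "t < 1" for t
  proof (cases "c \<le> t")
    case True
    show ?thesis
    proof (rule DERIV_nonneg_imp_nondecreasing[OF True])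
      fix x assume x: "c \<le> x" "x \<le> t"
      have "q c \<le> q x" using qmono x c that by auto
      then have "x * q c \<le> x * q x" using x c by (auto intro: mult_left_mono)
      also have "x * q x = H1 x" using x c unfolding q_def by auto
      finally show "\<exists>y. DERIV \<phi> x :> y \<and> 0 \<le> y"
        using Dphi[of x] x c that by (intro exI[of _ "H1 x - x * q c"]) auto
    qed
  next
    case False
    show ?thesis
    proof (rule DERIV_nonpos_imp_nonincreasing[of t c \<phi>])
      show "t \<le> c" using False by auto
      fix x assume x: "t \<le> x" "x \<le> c"
      have "H1 x \<le> x * q c"
      proof (cases "x = 0")
        case True then show ?thesis using H10 by simp
      next
        case False
        then have xp: "x > 0" using x that by auto
        have "q x \<le> q c" using qmono x c xp by auto
        then have "x * q x \<le> x * q c" using xp by (auto intro: mult_left_mono)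
        also have "x * q x = H1 x" using xp unfolding q_def by auto
        finally show ?thesis .
      qed
      then show "\<exists>y. DERIV \<phi> x :> y \<and> y \<le> 0"
        using Dphi[of x] x c that by (intro exI[of _ "H1 x - x * q c"]) auto
    qed
  qed
  show "G c + G (-c) - (deriv G c - deriv G (-c)) / (2*c) * c\<^sup>2
             \<le> G t + G (-t) - (deriv G c - deriv G (-c)) / (2*c) * t\<^sup>2" if "t \<in> {-1<..<1}" for t
  proof -
    have "\<phi> c \<le> \<phi> \<bar>t\<bar>" using phi_pos that by auto
    moreover have "\<phi> \<bar>t\<bar> = \<phi> t" unfolding \<phi>_def H_def by (cases "t \<ge> 0") auto
    ultimately show ?thesis unfolding \<phi>_def H_def L_def H1_def G1_def by simp
  qed
qed



lemma sign_lemma: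
  fixes y :: "'b \<Rightarrow> 'a::real_inner"
  assumes "finite V"
  shows "\<exists>e. (\<forall>v\<in>V. e v = 1 \<or> e v = -1) \<and>
             (\<Sum>v\<in>V. (norm (y v))\<^sup>2) \<le> (norm (\<Sum>v\<in>V. e v *\<^sub>R y v))\<^sup>2"
  using assms
proof (induction V rule: finite_induct)
  case empty then show ?case by auto
next
  case (insert x F)
  then obtain e where e: "\<forall>v\<in>F. e v = 1 \<or> e v = -1"
      "(\<Sum>v\<in>F. (norm (y v))\<^sup>2) \<le> (norm (\<Sum>v\<in>F. e v *\<^sub>R y v))\<^sup>2" by blast
  define s where "s = (\<Sum>v\<in>F. e v *\<^sub>R y v)"
  define \<sigma> :: real where "\<sigma> = (if s \<bullet> y x \<ge> 0 then 1 else -1)"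
  define e' where "e' = e(x := \<sigma>)"
  have "(\<Sum>v\<in>F. e' v *\<^sub>R y v) = s" unfolding s_def e'_def
    using insert(2) by (intro sum.cong) auto
  then have S: "(\<Sum>v\<in>insert x F. e' v *\<^sub>R y v) = \<sigma> *\<^sub>R y x + s"
    using insert(1,2) by (simp add: e'_def)
  have sg: "\<sigma> * (s \<bullet> y x) \<ge> 0" "\<sigma>\<^sup>2 = 1" unfolding \<sigma>_def by auto
  have "(norm (\<sigma> *\<^sub>R y x + s))\<^sup>2 = \<sigma>\<^sup>2 * (norm (y x))\<^sup>2 + (norm s)\<^sup>2 + 2 * (\<sigma> * (s \<bullet> y x))"
    unfolding power2_norm_eq_inner by (simp add: inner_add_left inner_add_right inner_commute power2_eq_square algebra_simps)
  then have "(norm (\<sigma> *\<^sub>R y x + s))\<^sup>2 \<ge> (norm (y x))\<^sup>2 + (\<Sum>v\<in>F. (norm (y v))\<^sup>2)"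
    using sg e(2) unfolding s_def by auto
  moreover have "\<forall>v\<in>insert x F. e' v = 1 \<or> e' v = -1" using e unfolding e'_def \<sigma>_def by auto
  ultimately show ?case using S insert(1,2) by (intro exI[of _ e']) auto
qed

lemma card_set_mset_le: "card (set_mset M) \<le> size M"
  by (induction M) (auto simp: card_insert_if)

lemma extract_half:
  fixes S :: "('a::real_normed_vector) set"
  assumes "finite S" "\<forall>v\<in>S. -v \<in> S \<and> v \<noteq> 0"
  shows "\<exists>V\<subseteq>S. 2 * card V \<le> card S \<and> S \<subseteq> V \<union> uminus ` V"
  using assms
proof (induction "card S" arbitrary: S rule: less_induct)
  case less
  show ?case
  proof (cases "S = {}")
    case True then show ?thesis by auto
  next
    case False
    then obtain v where v: "v \<in> S" by auto
    have nv1: "-v \<in> S" "v \<noteq> 0" using v less.prems by auto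
    have nv2: "v \<noteq> -v"
    proof
      assume "v = -v"
      then have "2 *\<^sub>R v = 0" by (metis scaleR_2 eq_neg_iff_add_eq_0)
      then show False using nv1 by simp
    qed
    note nv = nv1(1) nv2
    define S' where "S' = S - {v, -v}"
    have "card {v, -v} \<le> card S" using v nv less.prems(1) by (intro card_mono) auto
    then have cS': "card S' + 2 = card S" unfolding S'_def using v nv less.prems(1)
      by (simp add: card_Diff_subset)
    have "\<forall>w\<in>S'. -w \<in> S' \<and> w \<noteq> 0" using less.prems unfolding S'_def by auto
    then obtain V' where V': "V' \<subseteq> S'" "2 * card V' \<le> card S'" "S' \<subseteq> V' \<union> uminus ` V'"
      using less.hyps[of S'] cS' less.prems(1) unfolding S'_def by auto
    have fV': "finite V'" using V'(1) less.prems(1) unfolding S'_def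
      using finite_subset by blast
    have "card (insert v V') \<le> card V' + 1" using fV' by (simp add: card_insert_if)
    then show ?thesis using V' v cS' unfolding S'_def
      by (intro exI[of _ "insert v V'"]) auto
  qed
qed



lemma key_lemma:
  fixes V :: "(real^'n) set"
  assumes fin: "finite V" and unit: "\<forall>v\<in>V. norm v = 1" and cardV: "card V \<le> CARD('n)"
  shows "\<exists>x. norm x = 1 \<and> (\<forall>v\<in>V. \<bar>x \<bullet> v\<bar> \<le> 1 / sqrt (real CARD('n)))"
proof (cases "\<exists>z. z \<noteq> 0 \<and> (\<forall>v\<in>V. z \<bullet> v = 0)")
  case True
  then obtain z where z: "z \<noteq> 0" "\<forall>v\<in>V. z \<bullet> v = 0" by blast
  show ?thesis using z by (intro exI[of _ "z /\<^sub>R norm z"]) auto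
next
  case False
  note H = False
  have orth_ex: "\<exists>z. z \<noteq> 0 \<and> (\<forall>w\<in>W. z \<bullet> w = 0)" if "W \<subseteq> V" "card W < CARD('n)" for W
  proof -
    have fW: "finite W" using that fin finite_subset by blast
    have "dim W \<le> card W" by (rule dim_le_card[OF span_superset fW])
    then have "dim W < DIM(real^'n)" using that by simp
    then obtain z where "z \<noteq> 0" "\<And>y. y \<in> span W \<Longrightarrow> orthogonal z y"
      using orthogonal_to_subspace_exists by blast
    then show ?thesis using span_base unfolding orthogonal_def by blast
  qed
  have cV: "card V = CARD('n)"
    using orth_ex[of V] H cardV by force
  have "\<forall>v\<in>V. \<exists>y. y \<bullet> v = 1 \<and> (\<forall>w\<in>V - {v}. y \<bullet> w = 0)"
  proof
    fix v assume v: "v \<in> V"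
    have "card (V - {v}) < CARD('n)" using v cV fin
      by (metis card_Diff1_less)
    then obtain z where z: "z \<noteq> 0" "\<forall>w\<in>V - {v}. z \<bullet> w = 0"
      using orth_ex[of "V - {v}"] by blast
    have "z \<bullet> v \<noteq> 0"
    proof
      assume "z \<bullet> v = 0"
      then have "\<forall>w\<in>V. z \<bullet> w = 0" using z by auto
      then show False using H z by blast
    qed
    then show "\<exists>y. y \<bullet> v = 1 \<and> (\<forall>w\<in>V - {v}. y \<bullet> w = 0)"
      using z by (intro exI[of _ "z /\<^sub>R (z \<bullet> v)"]) auto
  qed
  then obtain y where y: "\<And>v. v \<in> V \<Longrightarrow> y v \<bullet> v = 1"
      "\<And>v w. v \<in> V \<Longrightarrow> w \<in> V \<Longrightarrow> w \<noteq> v \<Longrightarrow> y v \<bullet> w = 0"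
    by (metis DiffI singletonD)
  have ny: "norm (y v) \<ge> 1" if "v \<in> V" for v
  proof -
    have "1 = y v \<bullet> v" using y that by simp
    also have "\<dots> \<le> norm (y v) * norm v" by (rule norm_cauchy_schwarz)
    finally show ?thesis using unit that by simp
  qed
  obtain e where e: "\<forall>v\<in>V. e v = 1 \<or> e v = -1"
    "(\<Sum>v\<in>V. (norm (y v))\<^sup>2) \<le> (norm (\<Sum>v\<in>V. e v *\<^sub>R y v))\<^sup>2"
    using sign_lemma[OF fin, of y] by blast
  define s where "s = (\<Sum>v\<in>V. e v *\<^sub>R y v)"
  have "real (card V) = (\<Sum>v\<in>V. 1)" by simp
  also have "\<dots> \<le> (\<Sum>v\<in>V. (norm (y v))\<^sup>2)"
    using ny by (intro sum_mono) (simp add: one_le_power)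
  finally have ns2: "real CARD('n) \<le> (norm s)\<^sup>2" using e(2) cV unfolding s_def by simp
  have ns: "sqrt (real CARD('n)) \<le> norm s"
    using real_sqrt_le_mono[OF ns2] by simp
  have sq: "sqrt (real CARD('n)) > 0" by simp
  then have spos: "norm s > 0" using ns by linarith
  have sv: "s \<bullet> v = e v" if "v \<in> V" for v
  proof -
    have "s \<bullet> v = (\<Sum>w\<in>V. e w * (y w \<bullet> v))" unfolding s_def
      by (simp add: inner_sum_left)
    also have "\<dots> = e v * (y v \<bullet> v)"
    proof -
      have "\<forall>w\<in>V - {v}. e w * (y w \<bullet> v) = 0" using y(2) that by auto
      then show ?thesis by (subst sum.remove[OF fin that]) (auto intro!: sum.neutral)
    qed
    finally show ?thesis using y(1) that by simp
  qed
  show ?thesis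
  proof (intro exI[of _ "s /\<^sub>R norm s"] conjI ballI)
    show "norm (s /\<^sub>R norm s) = 1" using spos by simp
    fix v assume v: "v \<in> V"
    have "\<bar>(s /\<^sub>R norm s) \<bullet> v\<bar> = 1 / norm s" proof -
      have "\<bar>e v\<bar> = 1" using e(1) v by auto
      then show ?thesis using sv[OF v] spos by (simp add: abs_mult divide_inverse)
    qed
    also have "\<dots> \<le> 1 / sqrt (real CARD('n))" using ns sq spos by (intro divide_left_mono) auto
    finally show "\<bar>(s /\<^sub>R norm s) \<bullet> v\<bar> \<le> 1 / sqrt (real CARD('n))" .
  qed
qed

lemma parseval:
  fixes a :: "'n \<Rightarrow> real^'n"
  assumes a_orthonormal: "\<forall>i j. a i \<bullet> a j = (if i = j then 1 else 0)"
  shows "(\<Sum>i\<in>UNIV. (x \<bullet> a i)\<^sup>2) = (norm x)\<^sup>2"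
proof -
  have inj: "inj a" using a_orthonormal by (metis inj_on_def zero_neq_one)
  have po: "pairwise orthogonal (range a)"
    using a_orthonormal unfolding pairwise_def orthogonal_def by auto
  have nz: "0 \<notin> range a" using a_orthonormal by (metis imageE inner_zero_left zero_neq_one)
  have ind: "independent (range a)" by (rule pairwise_orthogonal_independent[OF po nz])
  have "dim (range a) = card (range a)" by (rule dim_eq_card_independent[OF ind])
  also have "\<dots> = CARD('n)" using inj by (simp add: card_image)
  finally have "span (range a) = UNIV" using dim_eq_full by fastforce
  define z where "z = x - (\<Sum>i\<in>UNIV. (x \<bullet> a i) *\<^sub>R a i)"
  have za: "orthogonal z w" if wr: "w \<in> range a" for w
  proof -
    obtain j where j: "w = a j" using wr by auto
    have "(\<Sum>i\<in>UNIV. (x \<bullet> a i) *\<^sub>R a i) \<bullet> a j = (\<Sum>i\<in>UNIV. (x \<bullet> a i) * (a i \<bullet> a j))"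
      by (simp add: inner_sum_left)
    also have "\<dots> = (\<Sum>i\<in>UNIV. if i = j then x \<bullet> a j else 0)"
      using a_orthonormal by (intro sum.cong) auto
    also have "\<dots> = x \<bullet> a j" by simp
    finally show ?thesis unfolding z_def orthogonal_def j by (simp add: inner_diff_left)
  qed
  have "orthogonal z z"
    by (rule orthogonal_to_span[of z "range a"]) (use \<open>span (range a) = UNIV\<close> za in auto)
  then have "z = 0" by (simp add: orthogonal_def)
  then have xe: "x = (\<Sum>i\<in>UNIV. (x \<bullet> a i) *\<^sub>R a i)" unfolding z_def by simp
  have "(norm x)\<^sup>2 = x \<bullet> (\<Sum>i\<in>UNIV. (x \<bullet> a i) *\<^sub>R a i)"
    using xe by (metis power2_norm_eq_inner)
  also have "\<dots> = (\<Sum>i\<in>UNIV. (x \<bullet> a i)\<^sup>2)"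
    by (simp add: inner_sum_right power2_eq_square)
  finally show ?thesis by simp
qed



lemma sum_mset_ereal: "(\<Sum>y\<in>#M. ereal (f y)) = ereal (\<Sum>y\<in>#M. f y)"
  by (induction M) auto

theorem corollary3p3:
  fixes g :: "real \<Rightarrow> ereal"
    and \<omega> :: "(real^'n) multiset"
    and a :: "'n \<Rightarrow> real^'n"
  assumes dim: "CARD('n) \<ge> 2"
    and g_finite: "\<forall>t\<in>{-1..<1}. \<bar>g t\<bar> \<noteq> \<infinity>"
    and g_cont: "continuous_on {-1..<1} (\<lambda>t. real_of_ereal (g t))"
    and g_at1: "(g \<longlongrightarrow> g 1) (at_left 1)"
    and g_diff: "\<forall>t\<in>{-1<..<1}. (\<lambda>s. real_of_ereal (g s)) differentiable (at t)"
    and g2_ex: "\<forall>t\<in>{-1<..<1}. deriv (\<lambda>s. real_of_ereal (g s)) differentiable (at t)"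
    and g2_nonneg: "\<forall>t\<in>{-1<..<1}. deriv (deriv (\<lambda>s. real_of_ereal (g s))) t \<ge> 0"
    and g2_convex: "convex_on {-1<..<1} (deriv (deriv (\<lambda>s. real_of_ereal (g s))))"
    and \<omega>_sphere: "\<forall>x\<in>#\<omega>. norm x = 1"
    and \<omega>_size: "size \<omega> = 2 * CARD('n)"
    and \<omega>_antipodal: "antipodal \<omega>"
    and a_orthonormal: "\<forall>i j. a i \<bullet> a j = (if i = j then 1 else 0)"
  shows "polarization g \<omega>
           \<le> polarization g (image_mset a (mset_set UNIV) + image_mset (\<lambda>i. - a i) (mset_set UNIV))
       \<and> polarization g (image_mset a (mset_set UNIV) + image_mset (\<lambda>i. - a i) (mset_set UNIV))
           = ereal (real CARD('n)) * (g (1 / sqrt (real CARD('n))) + g (- 1 / sqrt (real CARD('n))))"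
proof -
  define d where "d = CARD('n)"
  define c where "c = 1 / sqrt (real d)"
  define G where "G = (\<lambda>s. real_of_ereal (g s))"
  define \<Omega> where "\<Omega> = image_mset a (mset_set UNIV) + image_mset (\<lambda>i. - a i) (mset_set (UNIV::'n set))"
  have d2: "real d \<ge> 2" using dim unfolding d_def by simp
  have sd: "sqrt (real d) > 1" using d2 by (simp add: real_less_rsqrt)
  have c0: "0 < c" and c1: "c < 1" unfolding c_def using sd by (auto simp: field_simps)
  have dc2: "real d * c\<^sup>2 = 1" unfolding c_def using d2 by (simp add: power_divide)
  have gfin: "g t = ereal (G t)" if "t \<in> {-1..<1}" for t
    using g_finite that ereal_real' unfolding G_def by metis
  note CL = calc_lemma[of G c, unfolded G_def[symmetric], OF g_diff[folded G_def] g2_ex[folded G_def]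
      g2_nonneg[folded G_def] g2_convex[folded G_def] c0 c1]
  define L where "L = (deriv G c - deriv G (-c)) / (2*c)"
  define Hc where "Hc = G c + G (-c)"
  have mono: "G t + G (-t) \<le> Hc" if "\<bar>t\<bar> \<le> c" for t
  proof -
    have "G \<bar>t\<bar> + G (-\<bar>t\<bar>) \<le> Hc" unfolding Hc_def using CL(1)[of "\<bar>t\<bar>" c] that c1 by auto
    then show ?thesis by (cases "t \<ge> 0") auto
  qed
  have tang: "Hc - L * c\<^sup>2 \<le> G t + G (-t) - L * t\<^sup>2" if "t \<in> {-1<..<1}" for t
    using CL(2)[OF that] unfolding Hc_def L_def .
  have val: "ereal (real CARD('n)) * (g (1 / sqrt (real CARD('n))) + g (- 1 / sqrt (real CARD('n))))
      = ereal (real d * Hc)"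
  proof -
    have "-1 / sqrt (real CARD('n)) = -c" unfolding c_def d_def by simp
    moreover have "1 / sqrt (real CARD('n)) = c" unfolding c_def d_def by simp
    ultimately show ?thesis using gfin[of c] gfin[of "-c"] c0 c1 unfolding Hc_def d_def by simp
  qed
  have sumOmega: "(\<Sum>y\<in>#\<Omega>. g (x \<bullet> y)) = (\<Sum>i\<in>UNIV. g (x \<bullet> a i) + g (- (x \<bullet> a i)))" for x
    unfolding \<Omega>_def by (simp add: sum_unfold_sum_mset[symmetric] sum.distrib multiset.map_comp o_def inner_minus_right)
  have P2le: "polarization g \<Omega> \<le> ereal (real d * Hc)"
  proof -
    define x0 where "x0 = c *\<^sub>R (\<Sum>i\<in>UNIV. a i)"
    have x0a: "x0 \<bullet> a j = c" for j
    proof -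
      have "x0 \<bullet> a j = c * (\<Sum>i\<in>UNIV. a i \<bullet> a j)" unfolding x0_def by (simp add: inner_sum_left)
      also have "(\<Sum>i\<in>UNIV. a i \<bullet> a j) = (\<Sum>i\<in>UNIV. if i = j then 1 else 0)"
        using a_orthonormal by (intro sum.cong) auto
      finally show ?thesis by simp
    qed
    have "(norm x0)\<^sup>2 = 1" using parseval[OF a_orthonormal, of x0] x0a dc2 unfolding d_def by simp
    then have nx0: "norm x0 = 1" using norm_ge_zero[of x0] by (auto simp: power2_eq_1_iff)
    have "polarization g \<Omega> \<le> (\<Sum>y\<in>#\<Omega>. g (x0 \<bullet> y))"
      unfolding polarization_def by (rule INF_lower) (use nx0 in simp)
    also have "\<dots> = (\<Sum>i\<in>(UNIV::'n set). ereal Hc)"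
      unfolding sumOmega x0a Hc_def using gfin[of c] gfin[of "-c"] c0 c1 by simp
    also have "\<dots> = ereal (real d * Hc)" unfolding sum_ereal d_def by simp
    finally show ?thesis .
  qed
  have gm1: "\<bar>g (-1)\<bar> \<noteq> \<infinity>" using g_finite by auto
  have lim_neg: "((\<lambda>t. G (-t)) \<longlongrightarrow> G (-1)) (at_left 1)"
  proof -
    have l1: "(G \<longlongrightarrow> G (-1)) (at (-1) within {-1..<1})"
      using g_cont unfolding continuous_on_def G_def by auto
    have l2: "filterlim (\<lambda>t::real. -t) (at (-1) within {-1..<1}) (at_left 1)"
    proof (subst filterlim_at, intro conjI)
      show "\<forall>\<^sub>F x in at_left (1::real). - x \<in> {- 1..<1} \<and> - x \<noteq> - 1"
        using eventually_at_left_real[of 0 1, OF zero_less_one] by (rule eventually_mono) auto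
      show "((\<lambda>t::real. -t) \<longlongrightarrow> -1) (at_left 1)" by (intro tendsto_intros)
    qed
    show ?thesis by (rule filterlim_compose[OF l1 l2])
  qed
  have at1: "ereal (Hc - L * c\<^sup>2 + L - G (-1)) \<le> g 1"
  proof (rule tendsto_le[OF trivial_limit_at_left_real g_at1])
    show "((\<lambda>t. ereal (Hc - L * c\<^sup>2 + L * t\<^sup>2 - G (-t))) \<longlongrightarrow> ereal (Hc - L * c\<^sup>2 + L - G (-1))) (at_left 1)"
    proof -
      have "((\<lambda>t. Hc - L * c\<^sup>2 + L * t\<^sup>2 - G (-t)) \<longlongrightarrow> Hc - L * c\<^sup>2 + L * 1\<^sup>2 - G (-1)) (at_left 1)"
        by (intro tendsto_intros lim_neg)
      then show ?thesis by (intro tendsto_ereal) simp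
    qed
    show "\<forall>\<^sub>F t in at_left 1. ereal (Hc - L * c\<^sup>2 + L * t\<^sup>2 - G (-t)) \<le> g t"
      using eventually_at_left_real[of 0 1, OF zero_less_one]
    proof (rule eventually_mono)
      fix t :: real assume t: "t \<in> {0<..<1}"
      then have "Hc - L * c\<^sup>2 + L * t\<^sup>2 - G (-t) \<le> G t" using tang[of t] by auto
      then show "ereal (Hc - L * c\<^sup>2 + L * t\<^sup>2 - G (-t)) \<le> g t" using gfin[of t] t by auto
    qed
  qed
  have at1': "ereal (Hc - L * c\<^sup>2 + L) \<le> g 1 + g (-1)"
  proof -
    have "ereal (Hc - L * c\<^sup>2 + L) = ereal (Hc - L * c\<^sup>2 + L - G (-1)) + ereal (G (-1))" by simp
    also have "\<dots> \<le> g 1 + g (-1)" using at1 gfin[of "-1"] by (intro add_mono) auto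
    finally show ?thesis .
  qed
  have term_lb: "ereal (Hc - L * c\<^sup>2 + L * t\<^sup>2) \<le> g t + g (-t)" if tb1: "\<bar>t\<bar> \<le> 1" for t
  proof -
    consider "t = 1" | "t = -1" | "t \<in> {-1<..<1}" using tb1 by force
    then show ?thesis
    proof cases
      case 1 then show ?thesis using at1' by simp
    next
      case 2 then show ?thesis using at1' by (simp add: add.commute)
    next
      case 3
      then show ?thesis using tang[OF 3] gfin[of t] gfin[of "-t"] by auto
    qed
  qed
  have P2ge: "ereal (real d * Hc) \<le> polarization g \<Omega>"
    unfolding polarization_def
  proof (rule INF_greatest)
    fix x :: "real^'n" assume "x \<in> sphere 0 1"
    then have nx: "norm x = 1" by simp
    have tb: "\<bar>x \<bullet> a i\<bar> \<le> 1" for i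
    proof -
      have "norm (a i) = 1" using a_orthonormal by (simp add: norm_eq_sqrt_inner)
      then show ?thesis using Cauchy_Schwarz_ineq2[of x "a i"] nx by simp
    qed
    have "ereal (real d * Hc) = ereal (\<Sum>i\<in>UNIV. Hc - L * c\<^sup>2 + L * (x \<bullet> a i)\<^sup>2)"
    proof -
      have "(\<Sum>i\<in>UNIV. Hc - L * c\<^sup>2 + L * (x \<bullet> a i)\<^sup>2) = real d * (Hc - L * c\<^sup>2) + L * (\<Sum>i\<in>UNIV. (x \<bullet> a i)\<^sup>2)"
        unfolding d_def by (simp add: sum.distrib sum_distrib_left)
      also have "\<dots> = real d * Hc" using parseval[OF a_orthonormal, of x] nx dc2
        by (simp add: algebra_simps)
      finally show ?thesis by simp
    qed
    also have "\<dots> = (\<Sum>i\<in>UNIV. ereal (Hc - L * c\<^sup>2 + L * (x \<bullet> a i)\<^sup>2))" by (simp add: sum_ereal)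
    also have "\<dots> \<le> (\<Sum>i\<in>UNIV. g (x \<bullet> a i) + g (- (x \<bullet> a i)))"
      by (intro sum_mono term_lb tb)
    also have "\<dots> = (\<Sum>y\<in>#\<Omega>. g (x \<bullet> y))" by (rule sumOmega[symmetric])
    finally show "ereal (real d * Hc) \<le> (\<Sum>y\<in>#\<Omega>. g (x \<bullet> y))" .
  qed
  have P2: "polarization g \<Omega> = ereal (real d * Hc)" using P2le P2ge by (rule antisym)
  have P1: "polarization g \<omega> \<le> ereal (real d * Hc)"
  proof -
    define S where "S = set_mset \<omega>"
    have Ssym: "\<forall>v\<in>S. -v \<in> S \<and> v \<noteq> 0"
    proof
      fix v assume v: "v \<in> S"
      have "-v \<in># image_mset uminus \<omega>" using v unfolding S_def by auto
      then have "-v \<in># \<omega>" using \<omega>_antipodal unfolding antipodal_def by simp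
      moreover have "v \<noteq> 0" using v \<omega>_sphere unfolding S_def by auto
      ultimately show "-v \<in> S \<and> v \<noteq> 0" unfolding S_def by auto
    qed
    obtain V where V: "V \<subseteq> S" "2 * card V \<le> card S" "S \<subseteq> V \<union> uminus ` V"
      using extract_half[of S] Ssym unfolding S_def by auto
    have "card S \<le> 2 * d" using card_set_mset_le[of \<omega>] \<omega>_size unfolding S_def d_def by simp
    then have cV: "card V \<le> CARD('n)" using V(2) unfolding d_def by simp
    have fV: "finite V" using V(1) unfolding S_def using finite_subset by blast
    obtain x where x: "norm x = 1" "\<forall>v\<in>V. \<bar>x \<bullet> v\<bar> \<le> c"
      using key_lemma[OF fV _ cV] V(1) \<omega>_sphere unfolding S_def c_def d_def by auto
    have xb: "\<bar>x \<bullet> y\<bar> \<le> c" if "y \<in># \<omega>" for y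
    proof -
      have "y \<in> V \<union> uminus ` V" using V(3) that unfolding S_def by auto
      then show ?thesis using x(2) by (auto simp: inner_minus_right)
    qed
    have "polarization g \<omega> \<le> (\<Sum>y\<in>#\<omega>. g (x \<bullet> y))"
      unfolding polarization_def by (rule INF_lower) (use x in simp)
    also have "(\<Sum>y\<in>#\<omega>. g (x \<bullet> y)) = (\<Sum>y\<in>#\<omega>. ereal (G (x \<bullet> y)))"
    proof (rule arg_cong[where f = sum_mset], rule image_mset_cong)
      fix y assume "y \<in># \<omega>"
      then show "g (x \<bullet> y) = ereal (G (x \<bullet> y))" using xb[of y] c1 by (intro gfin) auto
    qed
    also have "\<dots> = ereal (\<Sum>y\<in>#\<omega>. G (x \<bullet> y))" by (rule sum_mset_ereal)
    also have "(\<Sum>y\<in>#\<omega>. G (x \<bullet> y)) \<le> real d * Hc"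
    proof -
      have "(\<Sum>y\<in>#\<omega>. G (x \<bullet> y)) = (\<Sum>y\<in>#image_mset uminus \<omega>. G (x \<bullet> y))"
        using \<omega>_antipodal unfolding antipodal_def by simp
      also have "\<dots> = (\<Sum>y\<in>#\<omega>. G (- (x \<bullet> y)))" by (simp add: multiset.map_comp o_def inner_minus_right)
      finally have e: "(\<Sum>y\<in>#\<omega>. G (x \<bullet> y)) = (\<Sum>y\<in>#\<omega>. G (- (x \<bullet> y)))" .
      have "2 * (\<Sum>y\<in>#\<omega>. G (x \<bullet> y)) = (\<Sum>y\<in>#\<omega>. G (x \<bullet> y) + G (- (x \<bullet> y)))"
        using e by (simp add: sum_mset.distrib)
      also have "\<dots> \<le> (\<Sum>y\<in>#\<omega>. Hc)" by (intro sum_mset_mono mono xb)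
      also have "\<dots> = 2 * (real d * Hc)" using \<omega>_size unfolding d_def by (simp add: sum_mset_constant)
      finally show ?thesis by simp
    qed
    finally show ?thesis by simp
  qed
  show ?thesis using P1 P2 val unfolding \<Omega>_def by simp
qed

end
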